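(* For integers $j\ge 0$ define $$f_j:=\frac{j^2+5j+2}{8j+4}\binom{2j+2}{j+1}-4^j,\qquad h_j:=2^{2j-1}-\binom{2j+1}{j}+\binom{2j-1}{j-1}\ (j\ge 1),\qquad h_0:=0,$$ and let $C_j=\frac{1}{j+1}\binom{2j}{j}$ be the $j$-th Catalan number. Then for every integer $s\ge 1$, $$f_s=\sum_{i=1}^{s}C_{s-i}\bigl(2f_{i-1}+h_{i-1}\bigr).$$ *)

theory Defs
  imports Complex_Main
begin

definition catalan :: "nat \<Rightarrow> real" where
  "catalan j = real ((2*j) choose j) / (real j + 1)"

definition f_seq :: "nat \<Rightarrow> real" where
  "f_seq j = (real j ^ 2 + 5 * real j + 2) / (8 * real j + 4) * real ((2*j+2) choose (j+1)) - 4 ^ j"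

definition h_seq :: "nat \<Rightarrow> real" where
  "h_seq j = (if j = 0 then 0 else
     2 ^ (2*j-1) - real ((2*j+1) choose j) + real ((2*j-1) choose (j-1)))"

end

theory Submission
  imports Defs "HOL-Computational_Algebra.Formal_Power_Series"
begin

definition Bc :: "nat \<Rightarrow> real" where "Bc k = real ((2*k) choose k)"
definition X :: "real \<Rightarrow> nat \<Rightarrow> real" where "X b k = (-4)^k * (b gchoose k)"

lemma t1: fixes y d::real assumes "y \<noteq> 0" "d \<noteq> 0" shows "a / (4*y) * (2*y/d * B) = a/(2*d) * B"
  using assms by (simp add: field_simps)
lemma t2: fixes d::real assumes "d \<noteq> 0" shows
 "2 * (((d-1)^2+5*(d-1)+2) / (2*d) * B - F) + (F/2 - (3*(d-1)+1)/(2*d) * B) = (1/2) * ((2*(d-1)+1) * B) + 2 * B - B/d - (3/2) * F"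
  using assms by (simp add: field_simps power2_eq_square)
lemma t2': fixes x::real assumes "x \<ge> 0" shows
 "2 * ((x^2+5*x+2) / (2*(x+1)) * B - F) + (F/2 - (3*x+1)/(2*(x+1)) * B) = (1/2) * ((2*x+1) * B) + 2 * B - B/(x+1) - (3/2) * F"
  using t2[of "x+1" B F] assms by simp
lemma t1': fixes x::real assumes "x \<ge> 0" shows "a / (8*x+4) * (2*(2*x+1)/(x+1) * B) = a/(2*(x+1)) * B"
proof -
  have e: "8 * x + 4 = 4*(2*x+1)" by simp
  show ?thesis unfolding e by (rule t1) (use assms in auto)
qed

lemma t3: fixes d::real assumes "d \<noteq> 0" shows
 "-(1/4) * (F - (2*(d-1)+1) * B) - (0 - B) - B/d + (3/4) * (B - F) = ((d-1)^2+5*(d-1)+2) / (2*d) * B - F"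
  using assms by (simp add: field_simps power2_eq_square)
lemma t3': fixes x::real assumes "x \<ge> 0" shows
 "-(1/4) * (F - (2*x+1) * B) - (0 - B) - B/(x+1) + (3/4) * (B - F) = (x^2+5*x+2) / (2*(x+1)) * B - F"
  using t3[of "x+1" F B] assms by simp

lemma alg2: "(c::real) * ((1/2)*p + 2*q - r - (3/2)*t) = (1/2)*(c*p) + 2*(c*q) - c*r - (3/2)*(c*t)"
  by (simp add: algebra_simps)

lemma gstep: "of_nat (Suc k) * (a gchoose Suc k) = (a - of_nat k) * (a gchoose k)"
  for a :: real
  using gbinomial_mult_1[of a k] by (simp add: algebra_simps)

lemma nat1: "(2*k+1 choose k) * (k+1) = (2*k+1) * (2*k choose k)"
proof -
  have "Suc (2*k) * (2*k choose k) = (Suc (2*k) choose Suc k) * Suc k"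
    by (rule Suc_times_binomial_eq)
  moreover have "(Suc (2*k) choose Suc k) = (Suc (2*k) choose k)"
    using binomial_symmetric[of "Suc k" "Suc (2*k)"] by simp
  ultimately show ?thesis by simp
qed

lemma nat2: "(2*k+2 choose (k+1)) = 2 * (2*k+1 choose k)"
proof -
  have "Suc k * (Suc (2*k+1) choose Suc k) = Suc (2*k+1) * ((2*k+1) choose k)"
    by (rule Suc_times_binomial)
  hence "Suc k * (Suc (2*k+1) choose Suc k) = Suc k * (2 * ((2*k+1) choose k))" by simp
  hence "(Suc (2*k+1) choose Suc k) = 2 * ((2*k+1) choose k)"
    by (metis mult_left_cancel nat.distinct(1))
  thus ?thesis by simp
qed

lemma divl: "x * (real k + 1) = y \<Longrightarrow> x = y / (real k + 1)"
  by (simp add: field_simps add_nonneg_eq_0_iff)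

lemma r1: "real (2*k+1 choose k) = (2*real k+1) / (real k+1) * Bc k"
proof -
  have "real ((2*k+1 choose k) * (k+1)) = real ((2*k+1) * (2*k choose k))"
    by (simp only: nat1)
  hence "real (2*k+1 choose k) * (real k+1) = (2*real k+1) * Bc k"
    unfolding Bc_def by (simp only: of_nat_mult of_nat_add of_nat_1 of_nat_numeral)
  hence "real (2*k+1 choose k) = (2*real k+1) * Bc k / (real k+1)" by (rule divl)
  thus ?thesis by simp
qed

lemma r2: "real (2*k+2 choose (k+1)) = 2*(2*real k+1) / (real k+1) * Bc k"
proof -
  have "real (2*k+2 choose (k+1)) = 2 * real (2*k+1 choose k)"
    by (simp only: nat2 of_nat_mult of_nat_numeral)
  thus ?thesis unfolding r1 by simp
qed

lemma Bc_Suc: "Bc (Suc k) = 2*(2*real k+1) / (real k+1) * Bc k"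
proof -
  have "2 * Suc k = 2*k+2" "Suc k = k+1" by simp_all
  hence "Bc (Suc k) = real (2*k+2 choose (k+1))" unfolding Bc_def by metis
  thus ?thesis using r2 by simp
qed
lemma alg1: "(real k+1) * A = (-1/2 - real k) * B \<Longrightarrow>
   (-4)^Suc k * A = 2*(2*real k+1) / (real k+1) * ((-4)^k * B)"
proof -
  assume h: "(real k+1) * A = (-1/2 - real k) * B"
  have eA: "A = (-1/2 - real k) * B / (real k + 1)" using h by (simp add: field_simps)
  show ?thesis by (subst eA) (simp add: field_simps)
qed

lemma Bc_X: "Bc k = X (-1/2) k"
proof (induction k)
  case 0
  then show ?case by (simp add: Bc_def X_def)
next
  case (Suc k)
  have g: "(real k+1) * ((-1/2::real) gchoose Suc k) = (-1/2 - real k) * ((-1/2) gchoose k)"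
    using gstep[of k "-1/2"] by (simp add: algebra_simps)
  hence gA: "((-1/2::real) gchoose Suc k) = (-1/2 - k) / (k+1) * ((-1/2) gchoose k)"
    by (simp add: field_simps)
  have "X (-1/2) (Suc k) = 2*(2*real k+1) / (real k+1) * X (-1/2) k"
    unfolding X_def using alg1[OF g] by simp
  thus ?case using Suc Bc_Suc by simp
qed

lemma cat_X: "catalan k = 2 * (-4)^k * ((1/2) gchoose (k+1))"
proof -
  have "of_nat (Suc k) * ((1/2::real) gchoose Suc k) = (1/2) * ((1/2 - 1) gchoose k)"
    by (rule gbinomial_absorption)
  hence gA: "((1/2::real) gchoose Suc k) = ((-1/2) gchoose k) / (2*(k+1))"
    by (simp add: field_simps)
  have "catalan k = X (-1/2) k / (k+1)" using Bc_X[of k] by (simp add: catalan_def Bc_def)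
  thus ?thesis by (simp add: gA X_def field_simps)
qed

lemma X32: "X (-3/2) k = (2*real k+1) * Bc k"
proof -
  have "of_nat (Suc k) * ((-1/2::real) gchoose Suc k) = (-1/2) * ((-1/2 - 1) gchoose k)"
    by (rule gbinomial_absorption)
  hence gA: "((-3/2::real) gchoose k) = -2*(k+1) * ((-1/2) gchoose Suc k)"
    by (simp add: field_simps)
  have "X (-3/2) k = (real k+1)/2 * X (-1/2) (Suc k)"
    unfolding X_def gA by (simp add: field_simps)
  thus ?thesis using Bc_X[of "Suc k"] Bc_Suc[of k] by (simp add: field_simps)
qed

lemma X1: "X (-1) k = 4^k"
proof -
  have "((-1::real) gchoose k) = (-1)^k * ((1 + of_nat k - 1) gchoose k)"
    using gbinomial_minus[of "1::real" k] by simp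
  also have "((1 + of_nat k - 1::real) gchoose k) = 1"
    using binomial_gbinomial[of k k, where 'a=real] by simp
  finally show ?thesis by (simp add: X_def power_mult_distrib[symmetric])
qed

lemma X0: "X 0 (Suc k) = 0" by (simp add: X_def)

lemma conv: "(\<Sum>k=0..n. ((1/2::real) gchoose (n+1-k)) * (b gchoose k))
   = ((b+1/2) gchoose (n+1)) - (b gchoose (n+1))"
proof -
  have "(\<Sum>k=0..Suc n. (b gchoose k) * ((1/2::real) gchoose (Suc n-k))) = (b+1/2) gchoose (Suc n)"
    by (rule gbinomial_Vandermonde)
  hence "(\<Sum>k=0..n. (b gchoose k) * ((1/2::real) gchoose (Suc n-k))) + (b gchoose Suc n) = (b+1/2) gchoose (Suc n)"
    by simp
  thus ?thesis by (simp add: mult.commute)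
qed

lemma conv2: "(\<Sum>k=0..n. ((1/2::real) gchoose (n+1-k)) * ((1/2) gchoose (k+1)))
   = -2 * ((1/2) gchoose (n+2))"
proof -
  have "(\<Sum>k=0..Suc (Suc n). ((1/2::real) gchoose k) * ((1/2) gchoose (Suc (Suc n)-k))) = (1/2+1/2) gchoose (Suc (Suc n))"
    by (rule gbinomial_Vandermonde)
  also have "\<dots> = 0"
    using binomial_gbinomial[of 1 "Suc (Suc n)", where 'a=real] by simp
  finally have "(\<Sum>k=0..Suc n. ((1/2::real) gchoose k) * ((1/2) gchoose (Suc (Suc n)-k))) + ((1/2) gchoose (Suc (Suc n))) = 0"
    by simp
  hence "((1/2) gchoose (Suc (Suc n))) + (\<Sum>k=0..n. ((1/2::real) gchoose Suc k) * ((1/2) gchoose (Suc (Suc n)-Suc k))) + ((1/2) gchoose (Suc (Suc n))) = 0"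
    by (simp only: sum.atLeast0_atMost_Suc_shift) simp
  hence "(\<Sum>k=0..n. ((1/2::real) gchoose Suc k) * ((1/2) gchoose (Suc n - k))) = -2 * ((1/2) gchoose (Suc (Suc n)))"
    by simp
  moreover have "(\<Sum>k=0..n. ((1/2::real) gchoose (n+1-k)) * ((1/2) gchoose (k+1))) = (\<Sum>k=0..n. ((1/2::real) gchoose Suc k) * ((1/2) gchoose (Suc n - k)))"
    by (rule sum.cong) (auto simp: Suc_diff_le)
  ultimately show ?thesis by simp
qed

lemma pw: "k \<le> n \<Longrightarrow> (-4::real)^(n-k) * (-4)^k = (-4)^n"
  by (simp add: power_add[symmetric])

lemma convD: "(\<Sum>k=0..n. catalan (n-k) * X b k) = 2*(-4)^n * (((b+1/2) gchoose (n+1)) - (b gchoose (n+1)))"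
proof -
  have "(\<Sum>k=0..n. catalan (n-k) * X b k) = (\<Sum>k=0..n. 2*(-4)^n * (((1/2::real) gchoose (n+1-k)) * (b gchoose k)))"
  proof (rule sum.cong)
    fix k assume "k \<in> {0..n}"
    hence kn: "k \<le> n" by simp
    hence e: "n - k + 1 = n+1-k" by simp
    show "catalan (n-k) * X b k = 2*(-4)^n * (((1/2::real) gchoose (n+1-k)) * (b gchoose k))"
      unfolding cat_X X_def e using pw[OF kn] by (simp add: algebra_simps)
  qed simp
  also have "\<dots> = 2*(-4)^n * (\<Sum>k=0..n. ((1/2::real) gchoose (n+1-k)) * (b gchoose k))"
    by (simp add: sum_distrib_left)
  finally show ?thesis using conv by simp
qed

lemma convC: "(\<Sum>k=0..n. catalan (n-k) * catalan k) = catalan (n+1)"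
proof -
  have "(\<Sum>k=0..n. catalan (n-k) * catalan k) = (\<Sum>k=0..n. 4*(-4)^n * (((1/2::real) gchoose (n+1-k)) * ((1/2) gchoose (k+1))))"
  proof (rule sum.cong)
    fix k assume "k \<in> {0..n}"
    hence kn: "k \<le> n" by simp
    hence e: "n - k + 1 = n+1-k" by simp
    show "catalan (n-k) * catalan k = 4*(-4)^n * (((1/2::real) gchoose (n+1-k)) * ((1/2) gchoose (k+1)))"
      unfolding cat_X[of "n-k"] cat_X[of k] e using pw[OF kn] by (simp add: algebra_simps)
  qed simp
  also have "\<dots> = 4*(-4)^n * (\<Sum>k=0..n. ((1/2::real) gchoose (n+1-k)) * ((1/2) gchoose (k+1)))"
    by (simp add: sum_distrib_left)
  finally show ?thesis using conv2[of n] cat_X[of "n+1"] by simp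
qed

lemma f_form: "f_seq k = (real k^2+5*real k+2) / (2*(real k+1)) * Bc k - 4^k"
proof -
  have "f_seq k = (real k ^ 2 + 5 * real k + 2) / (8 * real k + 4) * (2*(2*real k+1) / (real k+1) * Bc k) - 4 ^ k"
    unfolding f_seq_def r2 ..
  also have "\<dots> = (real k^2+5*real k+2) / (2*(real k+1)) * Bc k - 4^k"
    using t1'[of "real k" "real k^2+5*real k+2" "Bc k"] by simp
  finally show ?thesis .
qed

lemma h_form: "h_seq k = 4^k/2 - (3*real k+1)/(2*(real k+1)) * Bc k"
proof (cases k)
  case 0 then show ?thesis by (simp add: h_seq_def Bc_def)
next
  case (Suc j)
  have a: "2*k-1 = 2*j+1" "k - 1 = j" using Suc by auto
  have p: "(2::real)^(2*k-1) = 4^k/2" using a(1) Suc by (simp add: power_mult)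
  have q0: "real (2*j+1 choose j) = Bc k / 2"
  proof -
    have "real (2*j+2 choose (j+1)) = 2 * real (2*j+1 choose j)"
      by (simp only: nat2 of_nat_mult of_nat_numeral)
    moreover have "2*k = 2*j+2" "k = j+1" using Suc by simp_all
    hence "real (2*j+2 choose (j+1)) = Bc k" unfolding Bc_def by metis
    ultimately show ?thesis by simp
  qed
  have q: "real (2*k-1 choose (k-1)) = Bc k / 2" unfolding a by (rule q0)
  have k0: "k \<noteq> 0" using Suc by simp
  have "h_seq k = 2 ^ (2*k-1) - real ((2*k+1) choose k) + real ((2*k-1) choose (k-1))"
    unfolding h_seq_def using k0 by (simp only: if_False simp_thms)
  also have "\<dots> = 4^k/2 - (2*real k+1) / (real k+1) * Bc k + Bc k / 2"
    unfolding p q r1 ..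
  also have "\<dots> = 4^k/2 - (3*real k+1)/(2*(real k+1)) * Bc k" by (simp add: field_simps)
  finally show ?thesis .
qed

lemma g_form: "2 * f_seq k + h_seq k = (1/2) * X (-3/2) k + 2 * X (-1/2) k - catalan k - (3/2) * X (-1) k"
proof -
  have k: "real k + 1 \<noteq> 0" "2*(real k + 1) \<noteq> 0" "1 + real k \<noteq> 0" by (simp_all add: add_nonneg_eq_0_iff)
  show ?thesis
  unfolding f_form h_form X32 X1 Bc_X[symmetric] catalan_def Bc_def[symmetric]
  using t2'[of "real k" "Bc k" "4^k"] by simp
qed

theorem lemma2p1:
  fixes s :: nat
  assumes "s \<ge> 1"
  shows "f_seq s = (\<Sum>i=1..s. catalan (s - i) * (2 * f_seq (i - 1) + h_seq (i - 1)))"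
proof -
  obtain n where s: "s = Suc n" using assms by (cases s) auto
  have "(\<Sum>i=1..s. catalan (s - i) * (2 * f_seq (i - 1) + h_seq (i - 1)))
      = (\<Sum>k=0..n. catalan (n - k) * (2 * f_seq k + h_seq k))"
    unfolding s by (simp only: One_nat_def sum.shift_bounds_cl_Suc_ivl) simp
  also have "\<dots> = (\<Sum>k=0..n. (1/2) * (catalan (n-k) * X (-3/2) k) + 2 * (catalan (n-k) * X (-1/2) k)
        - catalan (n-k) * catalan k - (3/2) * (catalan (n-k) * X (-1) k))"
    by (rule sum.cong) (simp_all only: g_form alg2)
  also have "\<dots> = (1/2) * (\<Sum>k=0..n. catalan (n-k) * X (-3/2) k) + 2 * (\<Sum>k=0..n. catalan (n-k) * X (-1/2) k)
        - (\<Sum>k=0..n. catalan (n-k) * catalan k) - (3/2) * (\<Sum>k=0..n. catalan (n-k) * X (-1) k)"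
    by (simp only: sum.distrib sum_subtractf sum_distrib_left)
  also have "\<dots> = (1/2) * (2*(-4)^n * (((-1) gchoose (n+1)) - ((-3/2) gchoose (n+1))))
        + 2 * (2*(-4)^n * ((0 gchoose (n+1)) - ((-1/2) gchoose (n+1))))
        - catalan (n+1) - (3/2) * (2*(-4)^n * (((-1/2) gchoose (n+1)) - ((-1) gchoose (n+1))))"
  proof -
    have e1: "(-3/2::real) + 1/2 = -1" "(-1/2::real) + 1/2 = 0" "(-1::real) + 1/2 = -1/2" by simp_all
    have c1: "(\<Sum>k=0..n. catalan (n-k) * X (-3/2) k) = 2*(-4)^n * (((-1) gchoose (n+1)) - ((-3/2) gchoose (n+1)))"
      using convD[of n "-3/2"] by (simp only: e1)
    have c2: "(\<Sum>k=0..n. catalan (n-k) * X (-1/2) k) = 2*(-4)^n * ((0 gchoose (n+1)) - ((-1/2) gchoose (n+1)))"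
      using convD[of n "-1/2"] by (simp only: e1)
    have c3: "(\<Sum>k=0..n. catalan (n-k) * X (-1) k) = 2*(-4)^n * (((-1/2) gchoose (n+1)) - ((-1) gchoose (n+1)))"
      using convD[of n "-1"] by (simp only: e1)
    show ?thesis by (simp only: c1 c2 c3 convC)
  qed
  also have "\<dots> = -(1/4) * (X (-1) s - X (-3/2) s) - (X 0 s - X (-1/2) s) - catalan s
        + (3/4) * (X (-1/2) s - X (-1) s)"
    unfolding s X_def by (simp add: algebra_simps)
  also have "\<dots> = f_seq s"
    unfolding X0[of n, folded s] X1 X32 Bc_X[symmetric] f_form catalan_def Bc_def[symmetric]
    using t3'[of "real s" "4^s" "Bc s"] by simp
  finally show ?thesis by simp
qed

end
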